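(* For all positive integers $m,n,w,d$ with $2w\le m$, $$A(m,n,w,d)\ge\sqrt{\pi wn}\;2^{-\frac{n}{2}(3+\log_2 w)}\,B(mn,nw,d).$$
   Context: $J(m,w)$ denotes the set of binary vectors of length $m$ and Hamming weight $w$. Elements of $J(m,w)^n$ are identified with $m\times n$ binary matrices all of whose columns have weight $w$, with binary Hamming distance. $A(m,n,w,d)$ is the maximum cardinality of a nonempty subset of $J(m,w)^n$ with pairwise Hamming distances at least $2d$. $B(N,W,d)$ is the maximum cardinality of a nonempty subset of $J(N,W)$ with pairwise Hamming distances at least $2d$. Here $\pi$ is the circle constant. *)

theory Defs
  imports Complex_Main
begin

definition hweight :: "bool list \<Rightarrow> nat" where
  "hweight x = length (filter id x)"

definition hdist :: "bool list \<Rightarrow> bool list \<Rightarrow> nat" where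
  "hdist x y = length (filter (\<lambda>(a,b). a \<noteq> b) (zip x y))"

definition J :: "nat \<Rightarrow> nat \<Rightarrow> bool list set" where
  "J N W = {x. length x = N \<and> hweight x = W}"

text \<open>Elements of J(m,w)^n: lists of n columns, each in J(m,w) (an m x n binary matrix,
  columns of weight w). Distance = binary Hamming distance of the matrices = sum of the
  column distances.\<close>

definition Jpow :: "nat \<Rightarrow> nat \<Rightarrow> nat \<Rightarrow> bool list list set" where
  "Jpow m w n = {M. length M = n \<and> (\<forall>c\<in>set M. c \<in> J m w)}"

definition mdist :: "bool list list \<Rightarrow> bool list list \<Rightarrow> nat" where
  "mdist M M' = (\<Sum>j<length M. hdist (M ! j) (M' ! j))"

definition A :: "nat \<Rightarrow> nat \<Rightarrow> nat \<Rightarrow> nat \<Rightarrow> nat" where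
  "A m n w d = Max {card C | C. C \<subseteq> Jpow m w n \<and> C \<noteq> {} \<and>
      (\<forall>x\<in>C. \<forall>y\<in>C. x \<noteq> y \<longrightarrow> mdist x y \<ge> 2 * d)}"

definition B :: "nat \<Rightarrow> nat \<Rightarrow> nat \<Rightarrow> nat" where
  "B N W d = Max {card C | C. C \<subseteq> J N W \<and> C \<noteq> {} \<and>
      (\<forall>x\<in>C. \<forall>y\<in>C. x \<noteq> y \<longrightarrow> hdist x y \<ge> 2 * d)}"

end

theory Submission
  imports Defs "HOL-Combinatorics.Permutations"
begin


definition act :: "(nat \<Rightarrow> nat) \<Rightarrow> bool list \<Rightarrow> bool list" where
  "act p x = map (\<lambda>i. x ! p i) [0..<length x]"

lemma length_act[simp]: "length (act p x) = length x"
  by (simp add: act_def)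

lemma nth_act[simp]: "i < length x \<Longrightarrow> act p x ! i = x ! p i"
  by (simp add: act_def)

lemma hweight_card: "hweight x = card {i. i < length x \<and> x ! i}"
  unfolding hweight_def by (simp add: length_filter_conv_card)

lemma hdist_card: "length x = length y \<Longrightarrow> hdist x y = card {i. i < length x \<and> x ! i \<noteq> y ! i}"
  unfolding hdist_def by (simp add: length_filter_conv_card)
     (rule arg_cong[where f=card], auto)

lemma card_perm_pred:
  assumes "p permutes {..<N}"
  shows "card {i. i < N \<and> P (p i)} = card {i. i < N \<and> P i}"
proof -
  have "p ` {i. i < N \<and> P (p i)} = {i. i < N \<and> P i}"
  proof
    show "p ` {i. i < N \<and> P (p i)} \<subseteq> {i. i < N \<and> P i}"
      using permutes_in_image[OF assms] by auto
  next
    show "{i. i < N \<and> P i} \<subseteq> p ` {i. i < N \<and> P (p i)}"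
    proof
      fix x assume x: "x \<in> {i. i < N \<and> P i}"
      have "p (inv p x) = x" using permutes_inverses(1)[OF assms] by simp
      moreover have "inv p x < N"
        using x permutes_in_image[OF permutes_inv[OF assms]] by auto
      ultimately show "x \<in> p ` {i. i < N \<and> P (p i)}" using x
        by (metis (mono_tags, lifting) image_eqI mem_Collect_eq)
    qed
  qed
  moreover have "inj_on p {i. i < N \<and> P (p i)}"
    using permutes_inj[OF assms] by (simp add: inj_on_def inj_def)
  ultimately show ?thesis by (metis card_image)
qed

lemma hweight_act: "p permutes {..<length x} \<Longrightarrow> hweight (act p x) = hweight x"
proof -
  assume p: "p permutes {..<length x}"
  have "hweight (act p x) = card {i. i < length x \<and> x ! p i}"
    unfolding hweight_card by (rule arg_cong[where f=card]) auto
  also have "\<dots> = hweight x" unfolding hweight_card by (rule card_perm_pred[OF p])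
  finally show ?thesis .
qed

lemma hdist_act:
  assumes p: "p permutes {..<length x}" and l: "length y = length x"
  shows "hdist (act p x) (act p y) = hdist x y"
proof -
  have "hdist (act p x) (act p y) = card {i. i < length x \<and> (\<lambda>j. x ! j \<noteq> y ! j) (p i)}"
    using l by (simp add: hdist_card) (rule arg_cong[where f=card], auto)
  also have "\<dots> = card {i. i < length x \<and> (\<lambda>j. x ! j \<noteq> y ! j) i}"
    by (rule card_perm_pred[OF p])
  also have "\<dots> = hdist x y" using l by (simp add: hdist_card)
  finally show ?thesis .
qed

lemma act_comp:
  assumes "q permutes {..<length x}"
  shows "act (p \<circ> q) x = act q (act p x)"
proof (rule nth_equalityI)
  fix i assume i: "i < length (act (p \<circ> q) x)"
  hence "q i < length x" using permutes_in_image[OF assms] by auto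
  thus "act (p \<circ> q) x ! i = act q (act p x) ! i" using i by simp
qed simp

lemma act_id: "act id x = x"
  by (rule nth_equalityI) simp_all

lemma act_inj:
  assumes p: "p permutes {..<length x}" and l: "length y = length x" and e: "act p x = act p y"
  shows "x = y"
proof (rule nth_equalityI)
  show "length x = length y" using l by simp
next
  fix j assume j: "j < length x"
  have ij: "inv p j < length x"
    using j permutes_in_image[OF permutes_inv[OF p]] by auto
  have "act p x ! inv p j = act p y ! inv p j" using e by simp
  hence "x ! p (inv p j) = y ! p (inv p j)" using ij l by simp
  thus "x ! j = y ! j" using permutes_inverses(1)[OF p] by simp
qed

lemma act_J: "p permutes {..<N} \<Longrightarrow> x \<in> J N W \<Longrightarrow> act p x \<in> J N W"
  unfolding J_def using hweight_act by auto

lemma act_inv: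
  assumes p: "p permutes {..<length x}"
  shows "act p (act (inv p) x) = x"
proof -
  have "act p (act (inv p) x) = act (inv p \<circ> p) x" using act_comp[OF p] by simp
  also have "inv p \<circ> p = id" using permutes_inv_o(2)[OF p] .
  finally show ?thesis using act_id[of x] by (simp add: id_def)
qed

lemma act_trans:
  assumes x: "x \<in> J N W" and y: "y \<in> J N W"
  shows "\<exists>p. p permutes {..<N} \<and> act p x = y"
proof -
  define Tx where "Tx = {i. i < N \<and> x ! i}"
  define Ty where "Ty = {i. i < N \<and> y ! i}"
  define Fx where "Fx = {i. i < N \<and> \<not> x ! i}"
  define Fy where "Fy = {i. i < N \<and> \<not> y ! i}"
  have cTx: "card Tx = W" using x unfolding J_def Tx_def by (auto simp add: hweight_card)
  have cTy: "card Ty = W" using y unfolding J_def Ty_def by (auto simp add: hweight_card)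
  have "Fx = {..<N} - Tx" unfolding Fx_def Tx_def by auto
  hence cFx: "card Fx = N - W" using cTx by (simp add: card_Diff_subset Tx_def subset_eq)
  have "Fy = {..<N} - Ty" unfolding Fy_def Ty_def by auto
  hence cFy: "card Fy = N - W" using cTy by (simp add: card_Diff_subset Ty_def subset_eq)
  obtain h where h: "bij_betw h Ty Tx"
    using finite_same_card_bij[of Ty Tx] cTx cTy unfolding Tx_def Ty_def by auto
  obtain k where k: "bij_betw k Fy Fx"
    using finite_same_card_bij[of Fy Fx] cFx cFy unfolding Fx_def Fy_def by auto
  define p where "p = (\<lambda>i. if i \<in> Ty then h i else if i \<in> Fy then k i else i)"
  have b1: "bij_betw p Ty Tx" using h by (rule bij_betw_cong[THEN iffD1, rotated]) (simp add: p_def)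
  have b2: "bij_betw p Fy Fx" using k
    by (rule bij_betw_cong[THEN iffD1, rotated]) (simp add: p_def Fy_def Ty_def)
  have "bij_betw p (Ty \<union> Fy) (Tx \<union> Fx)"
    by (rule bij_betw_combine[OF b1 b2]) (auto simp: Tx_def Fx_def)
  moreover have "Ty \<union> Fy = {..<N}" "Tx \<union> Fx = {..<N}"
    unfolding Ty_def Fy_def Tx_def Fx_def by auto
  ultimately have bp: "bij_betw p {..<N} {..<N}" by simp
  have pp: "p permutes {..<N}"
    by (rule bij_imp_permutes[OF bp]) (auto simp: p_def Ty_def Fy_def)
  have "act p x = y"
  proof (rule nth_equalityI)
    show "length (act p x) = length y" using x y by (simp add: J_def)
  next
    fix i assume i: "i < length (act p x)"
    hence iN: "i < N" using x by (simp add: J_def)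
    show "act p x ! i = y ! i"
    proof (cases "y ! i")
      case True
      hence "i \<in> Ty" using iN by (simp add: Ty_def)
      hence "p i \<in> Tx" using b1 by (auto simp: bij_betw_def)
      thus ?thesis using i True by (simp add: Tx_def)
    next
      case False
      hence "i \<in> Fy" using iN by (simp add: Fy_def)
      hence "p i \<in> Fx" using b2 by (auto simp: bij_betw_def)
      thus ?thesis using i False by (simp add: Fx_def)
    qed
  qed
  thus ?thesis using pp by blast
qed

lemma finite_J: "finite (J N W)"
proof -
  have "J N W \<subseteq> {xs. set xs \<subseteq> UNIV \<and> length xs = N}" unfolding J_def by auto
  thus ?thesis using finite_lists_length_eq[of "UNIV :: bool set" N] finite_subset by auto
qed

lemma card_filter_sum: "finite Y \<Longrightarrow> card {x\<in>Y. P x} = (\<Sum>x\<in>Y. if P x then 1 else 0 :: nat)"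
  using sum.inter_filter[of Y "\<lambda>_. 1::nat" P] by simp

lemma cnt_le:
  assumes c: "c \<in> J N W" and c': "c' \<in> J N W"
  shows "card {p. p permutes {..<N} \<and> act p c \<in> S} \<le> card {p. p permutes {..<N} \<and> act p c' \<in> S}"
proof -
  obtain r where r: "r permutes {..<N}" "act r c' = c" using act_trans[OF c' c] by blast
  have lc': "length c' = N" using c' by (simp add: J_def)
  show ?thesis
  proof (rule card_inj_on_le[where f="\<lambda>p. r \<circ> p"])
    show "inj_on ((\<circ>) r) {p. p permutes {..<N} \<and> act p c \<in> S}"
      using permutes_inj[OF r(1)] by (auto simp: inj_on_def fun_eq_iff inj_def)
    show "(\<circ>) r ` {p. p permutes {..<N} \<and> act p c \<in> S} \<subseteq> {p. p permutes {..<N} \<and> act p c' \<in> S}"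
    proof
      fix q assume "q \<in> (\<circ>) r ` {p. p permutes {..<N} \<and> act p c \<in> S}"
      then obtain p where p: "p permutes {..<N}" "act p c \<in> S" "q = r \<circ> p" by blast
      have "act (r \<circ> p) c' = act p (act r c')" using act_comp[of p c' r] p(1) lc' by simp
      thus "q \<in> {p. p permutes {..<N} \<and> act p c' \<in> S}"
        using p r permutes_compose[OF p(1) r(1)] by simp
    qed
    show "finite {p. p permutes {..<N} \<and> act p c' \<in> S}"
      using finite_permutations[of "{..<N}"] by (rule finite_subset[rotated]) auto
  qed
qed

lemma cnt_eq:
  assumes c: "c \<in> J N W" and c': "c' \<in> J N W"
  shows "card {p. p permutes {..<N} \<and> act p c \<in> S} = card {p. p permutes {..<N} \<and> act p c' \<in> S}"
  using cnt_le[OF c c', of S] cnt_le[OF c' c, of S] by simp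

lemma double_count:
  assumes "finite X"
  shows "(\<Sum>p\<in>{p. p permutes {..<N}}. card {c\<in>X. act p c \<in> S})
       = (\<Sum>c\<in>X. card {p\<in>{p. p permutes {..<N}}. act p c \<in> S})"
proof -
  have fG: "finite {p. p permutes {..<N}}" by (rule finite_permutations) simp
  have "(\<Sum>p\<in>{p. p permutes {..<N}}. card {c\<in>X. act p c \<in> S})
     = (\<Sum>p\<in>{p. p permutes {..<N}}. \<Sum>c\<in>X. if act p c \<in> S then 1 else 0)"
    by (simp only: card_filter_sum[OF assms])
  also have "\<dots> = (\<Sum>c\<in>X. \<Sum>p\<in>{p. p permutes {..<N}}. if act p c \<in> S then 1 else 0)"
    by (rule sum.swap)
  also have "\<dots> = (\<Sum>c\<in>X. card {p\<in>{p. p permutes {..<N}}. act p c \<in> S})"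
    by (simp only: card_filter_sum[OF fG])
  finally show ?thesis .
qed

lemma card_preimage_act:
  assumes p: "p permutes {..<N}" and S: "S \<subseteq> J N W"
  shows "card {c\<in>J N W. act p c \<in> S} = card S"
proof -
  have "bij_betw (act p) {c\<in>J N W. act p c \<in> S} S"
    unfolding bij_betw_def
  proof
    show "inj_on (act p) {c \<in> J N W. act p c \<in> S}"
      using act_inj p by (auto simp: inj_on_def J_def)
    show "act p ` {c \<in> J N W. act p c \<in> S} = S"
    proof
      show "act p ` {c \<in> J N W. act p c \<in> S} \<subseteq> S" by auto
      show "S \<subseteq> act p ` {c \<in> J N W. act p c \<in> S}"
      proof
        fix s assume s: "s \<in> S"
        hence sJ: "s \<in> J N W" using S by auto
        hence ls: "length s = N" by (simp add: J_def)
        have e: "act p (act (inv p) s) = s" using act_inv[of p s] p ls by simp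
        have "act (inv p) s \<in> J N W" by (rule act_J[OF permutes_inv[OF p] sJ])
        thus "s \<in> act p ` {c \<in> J N W. act p c \<in> S}" using e s by (metis (mono_tags, lifting) image_eqI mem_Collect_eq)
      qed
    qed
  qed
  thus ?thesis by (rule bij_betw_same_card)
qed

lemma avg:
  assumes S: "S \<subseteq> J N W" and C: "C \<subseteq> J N W"
  shows "\<exists>p. p permutes {..<N} \<and> card C * card S \<le> card {c\<in>C. act p c \<in> S} * card (J N W)"
proof (cases "C = {}")
  case True thus ?thesis using permutes_id by fastforce
next
  case False
  then obtain c0 where c0: "c0 \<in> C" by blast
  define G where "G = {p. p permutes {..<N}}"
  define K where "K = card {p\<in>G. act p c0 \<in> S}"
  have fG: "finite G" unfolding G_def by (rule finite_permutations) simp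
  have Kc: "card {p\<in>G. act p c \<in> S} = K" if "c \<in> J N W" for c
    unfolding K_def G_def using cnt_eq[OF that, of c0 S] c0 C by auto
  have "(\<Sum>p\<in>G. card {c\<in>J N W. act p c \<in> S}) = (\<Sum>c\<in>J N W. card {p\<in>G. act p c \<in> S})"
    unfolding G_def by (rule double_count[OF finite_J])
  hence e1: "card G * card S = card (J N W) * K"
    using card_preimage_act[OF _ S] Kc by (simp add: G_def)
  have fC: "finite C" using C finite_J[of N W] finite_subset by blast
  have "(\<Sum>p\<in>G. card {c\<in>C. act p c \<in> S}) = (\<Sum>c\<in>C. card {p\<in>G. act p c \<in> S})"
    unfolding G_def by (rule double_count[OF fC])
  also have "\<dots> = (\<Sum>c\<in>C. K)" using Kc C by (intro sum.cong) auto
  finally have e2: "(\<Sum>p\<in>G. card {c\<in>C. act p c \<in> S}) = card C * K"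
    by simp
  show ?thesis
  proof (rule ccontr)
    assume "\<not> ?thesis"
    hence lt: "\<And>p. p \<in> G \<Longrightarrow> card {c\<in>C. act p c \<in> S} * card (J N W) < card C * card S"
      unfolding G_def by auto
    have "id \<in> G" unfolding G_def by (simp add: permutes_id)
    hence "G \<noteq> {}" by auto
    hence "(\<Sum>p\<in>G. card {c\<in>C. act p c \<in> S} * card (J N W)) < (\<Sum>p\<in>G. card C * card S)"
      using fG lt by (intro sum_strict_mono) auto
    hence "card C * K * card (J N W) < card G * (card C * card S)"
      by (simp add: sum_distrib_right[symmetric] e2)
    thus False using e1 by (simp add: algebra_simps)
  qed
qed

lemma len_concat: "\<forall>c\<in>set M. length c = m \<Longrightarrow> length (concat M) = length M * m"
  by (induction M) auto

lemma hw_concat: "\<forall>c\<in>set M. hweight c = w \<Longrightarrow> hweight (concat M) = length M * w"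
  by (induction M) (auto simp: hweight_def)

lemma hdist_append: "length a = length c \<Longrightarrow> hdist (a @ b) (c @ e) = hdist a c + hdist b e"
  by (simp add: hdist_def)

lemma mdist_concat:
  "length M' = length M \<Longrightarrow> \<forall>c\<in>set M. length c = m \<Longrightarrow> \<forall>c\<in>set M'. length c = m
   \<Longrightarrow> mdist M M' = hdist (concat M) (concat M')"
proof (induction M arbitrary: M')
  case Nil thus ?case by (simp add: mdist_def hdist_def)
next
  case (Cons a M)
  then obtain b M'' where M': "M' = b # M''" by (cases M') auto
  have "mdist (a # M) (b # M'') = hdist a b + mdist M M''"
    unfolding mdist_def by (simp only: length_Cons sum.lessThan_Suc_shift) simp
  also have "mdist M M'' = hdist (concat M) (concat M'')" using Cons M' by simp
  finally show ?case using M' Cons.prems by (simp add: hdist_append)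
qed

lemma Jpow_alt: "Jpow m w n = {xs. set xs \<subseteq> J m w \<and> length xs = n}"
  unfolding Jpow_def by auto

lemma card_Jpow: "card (Jpow m w n) = (card (J m w)) ^ n"
  unfolding Jpow_alt by (rule card_lists_length_eq[OF finite_J])

lemma finite_Jpow: "finite (Jpow m w n)"
  unfolding Jpow_alt by (rule finite_lists_length_eq[OF finite_J])

lemma card_J: "card (J N W) = N choose W"
proof -
  define f where "f = (\<lambda>x::bool list. {i. i < N \<and> x ! i})"
  have "bij_betw f (J N W) {T. T \<subseteq> {..<N} \<and> card T = W}"
    unfolding bij_betw_def
  proof
    show "inj_on f (J N W)"
    proof (rule inj_onI)
      fix x y assume x: "x \<in> J N W" and y: "y \<in> J N W" and e: "f x = f y"
      show "x = y"
      proof (rule nth_equalityI)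
        show "length x = length y" using x y by (simp add: J_def)
        fix i assume "i < length x"
        hence "i < N" using x by (simp add: J_def)
        thus "x ! i = y ! i" using e unfolding f_def by blast
      qed
    qed
    show "f ` J N W = {T. T \<subseteq> {..<N} \<and> card T = W}"
    proof
      show "f ` J N W \<subseteq> {T. T \<subseteq> {..<N} \<and> card T = W}"
        unfolding f_def J_def by (auto simp: hweight_card)
      show "{T. T \<subseteq> {..<N} \<and> card T = W} \<subseteq> f ` J N W"
      proof
        fix T assume T: "T \<in> {T. T \<subseteq> {..<N} \<and> card T = W}"
        define x where "x = map (\<lambda>i. i \<in> T) [0..<N]"
        have fx: "f x = T" using T unfolding f_def x_def by auto
        have "hweight x = card (f x)" unfolding hweight_card f_def x_def by simp
        hence "x \<in> J N W" using fx T by (simp add: J_def x_def)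
        thus "T \<in> f ` J N W" using fx by blast
      qed
    qed
  qed
  hence "card (J N W) = card {T. T \<subseteq> {..<N} \<and> card T = W}" by (rule bij_betw_same_card)
  also have "\<dots> = N choose W" using n_subsets[of "{..<N}" W] by simp
  finally show ?thesis .
qed

lemma J_nonempty: "W \<le> N \<Longrightarrow> replicate W True @ replicate (N - W) False \<in> J N W"
  by (simp add: J_def hweight_def)

lemma B_attained:
  assumes "W \<le> N"
  shows "\<exists>C. C \<subseteq> J N W \<and> (\<forall>x\<in>C. \<forall>y\<in>C. x \<noteq> y \<longrightarrow> hdist x y \<ge> 2 * d) \<and> card C = B N W d"
proof -
  let ?P = "\<lambda>C. C \<subseteq> J N W \<and> C \<noteq> {} \<and> (\<forall>x\<in>C. \<forall>y\<in>C. x \<noteq> y \<longrightarrow> hdist x y \<ge> 2 * d)"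
  have fin: "finite {card C | C. ?P C}"
  proof (rule finite_subset)
    show "{card C | C. ?P C} \<subseteq> card ` Pow (J N W)" by auto
  qed (simp add: finite_J)
  have ne: "{card C | C. ?P C} \<noteq> {}"
  proof -
    have "?P {replicate W True @ replicate (N - W) False}" using J_nonempty[OF assms] by auto
    thus ?thesis by blast
  qed
  have "B N W d \<in> {card C | C. ?P C}" unfolding B_def using Max_in[OF fin ne] by simp
  then obtain C where C: "B N W d = card C" "?P C" by auto
  show ?thesis using C by metis
qed

lemma A_ge:
  assumes "C \<subseteq> Jpow m w n" "C \<noteq> {}" "\<forall>x\<in>C. \<forall>y\<in>C. x \<noteq> y \<longrightarrow> mdist x y \<ge> 2 * d"
  shows "card C \<le> A m n w d"
proof -
  let ?P = "\<lambda>C. C \<subseteq> Jpow m w n \<and> C \<noteq> {} \<and> (\<forall>x\<in>C. \<forall>y\<in>C. x \<noteq> y \<longrightarrow> mdist x y \<ge> 2 * d)"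
  have fin: "finite {card C | C. ?P C}"
  proof (rule finite_subset)
    show "{card C | C. ?P C} \<subseteq> card ` Pow (Jpow m w n)" by auto
  qed (simp add: finite_Jpow)
  have "card C \<in> {card C | C. ?P C}"
    by (rule CollectI, rule exI[where x=C]) (use assms in simp)
  thus ?thesis unfolding A_def by (rule Max_ge[OF fin])
qed

lemma inj_concat_Jpow: "inj_on concat (Jpow m w n)"
proof (rule inj_onI)
  fix M M' assume M: "M \<in> Jpow m w n" and M': "M' \<in> Jpow m w n" and e: "concat M = concat M'"
  have "\<forall>(x, y) \<in> set (zip M M'). length x = length y"
  proof (clarify)
    fix x y assume xy: "(x, y) \<in> set (zip M M')"
    have "x \<in> set M" using set_zip_leftD[OF xy] .
    moreover have "y \<in> set M'" using set_zip_rightD[OF xy] .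
    ultimately show "length x = length y" using M M' by (auto simp: Jpow_def J_def)
  qed
  moreover have "length M = length M'" using M M' by (simp add: Jpow_def)
  ultimately show "M = M'" using e concat_eq_concat_iff by blast
qed

lemma concat_Jpow: "M \<in> Jpow m w n \<Longrightarrow> concat M \<in> J (m * n) (n * w)"
proof -
  assume M: "M \<in> Jpow m w n"
  have "length (concat M) = n * m" using M len_concat[of M m] by (auto simp: Jpow_def J_def)
  moreover have "hweight (concat M) = n * w" using M hw_concat[of M w] by (auto simp: Jpow_def J_def)
  ultimately show ?thesis by (simp add: J_def mult.commute)
qed

lemma comb_main:
  assumes "w \<le> m"
  shows "B (m*n) (n*w) d * (m choose w)^n \<le> A m n w d * ((m*n) choose (n*w))"
proof -
  define N where "N = m * n"
  define W where "W = n * w"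
  have WN: "W \<le> N" using assms by (simp add: N_def W_def mult.commute)
  obtain C0 where C0: "C0 \<subseteq> J N W" "\<forall>x\<in>C0. \<forall>y\<in>C0. x \<noteq> y \<longrightarrow> hdist x y \<ge> 2 * d"
    "card C0 = B N W d" using B_attained[OF WN, of d] by metis
  define S where "S = concat ` Jpow m w n"
  have SJ: "S \<subseteq> J N W"
  proof
    fix x assume "x \<in> S"
    then obtain M where "M \<in> Jpow m w n" "x = concat M" unfolding S_def by auto
    thus "x \<in> J N W" using concat_Jpow[of M m w n] unfolding N_def W_def by simp
  qed
  have cS: "card S = (m choose w) ^ n"
    unfolding S_def using card_image[OF inj_concat_Jpow] card_Jpow card_J by simp
  obtain p where p: "p permutes {..<N}" "card C0 * card S \<le> card {c\<in>C0. act p c \<in> S} * card (J N W)"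
    using avg[OF SJ C0(1)] by blast
  define Cp where "Cp = {c\<in>C0. act p c \<in> S}"
  define D where "D = act p ` Cp"
  define Cq where "Cq = {M\<in>Jpow m w n. concat M \<in> D}"
  have lenN: "length c = N" if "c \<in> C0" for c using that C0(1) by (auto simp: J_def)
  have injp: "inj_on (act p) Cp"
  proof (rule inj_onI)
    fix x y assume "x \<in> Cp" "y \<in> Cp" "act p x = act p y"
    thus "x = y" using act_inj[of p x y] p(1) lenN unfolding Cp_def by auto
  qed
  have DS: "D \<subseteq> S" unfolding D_def Cp_def by auto
  have bq: "bij_betw concat Cq D"
    unfolding bij_betw_def
  proof
    show "inj_on concat Cq" using inj_concat_Jpow by (rule inj_on_subset) (auto simp: Cq_def)
    show "concat ` Cq = D"
    proof
      show "concat ` Cq \<subseteq> D" unfolding Cq_def by auto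
      show "D \<subseteq> concat ` Cq"
      proof
        fix x assume x: "x \<in> D"
        then obtain M where "M \<in> Jpow m w n" "x = concat M" using DS unfolding S_def by auto
        thus "x \<in> concat ` Cq" using x unfolding Cq_def by auto
      qed
    qed
  qed
  have cCq: "card Cq = card Cp"
    using bij_betw_same_card[OF bq] card_image[OF injp] by (simp add: D_def)
  have cpA: "card Cp \<le> A m n w d"
  proof (cases "Cq = {}")
    case True thus ?thesis using cCq by simp
  next
    case False
    have "\<forall>x\<in>Cq. \<forall>y\<in>Cq. x \<noteq> y \<longrightarrow> mdist x y \<ge> 2 * d"
    proof (intro ballI impI)
      fix M1 M2 assume M1: "M1 \<in> Cq" and M2: "M2 \<in> Cq" and ne: "M1 \<noteq> M2"
      obtain c1 where c1: "c1 \<in> Cp" "concat M1 = act p c1" using M1 unfolding Cq_def D_def by auto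
      obtain c2 where c2: "c2 \<in> Cp" "concat M2 = act p c2" using M2 unfolding Cq_def D_def by auto
      have M1J: "M1 \<in> Jpow m w n" and M2J: "M2 \<in> Jpow m w n" using M1 M2 by (auto simp: Cq_def)
      have "concat M1 \<noteq> concat M2"
      proof
        assume "concat M1 = concat M2"
        hence "M1 = M2" by (rule inj_onD[OF inj_concat_Jpow _ M1J M2J])
        thus False using ne by simp
      qed
      hence "c1 \<noteq> c2" using c1 c2 by auto
      moreover have "c1 \<in> C0" "c2 \<in> C0" using c1 c2 by (auto simp: Cp_def)
      ultimately have h: "hdist c1 c2 \<ge> 2 * d" using C0(2) by simp
      have "mdist M1 M2 = hdist (concat M1) (concat M2)"
        using M1J M2J by (intro mdist_concat[where m=m]) (auto simp: Jpow_def J_def)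
      also have "\<dots> = hdist c1 c2" using c1 c2 hdist_act[of p c1 c2] p(1) lenN \<open>c1 \<in> C0\<close> \<open>c2 \<in> C0\<close>
        by simp
      finally show "mdist M1 M2 \<ge> 2 * d" using h by simp
    qed
    moreover have "Cq \<subseteq> Jpow m w n" by (auto simp: Cq_def)
    ultimately have "card Cq \<le> A m n w d" by (intro A_ge[OF _ False])
    thus ?thesis using cCq by simp
  qed
  have "B N W d * (m choose w)^n \<le> card Cp * card (J N W)"
    using p(2) C0(3) cS by (simp add: Cp_def)
  also have "\<dots> \<le> A m n w d * card (J N W)" using cpA by simp
  finally show ?thesis by (simp add: card_J N_def W_def)
qed



lemma h_lower:
  fixes x :: real assumes "0 \<le> x" "x < 1"
  shows "2*x + 2/3*x^3 \<le> ln (1+x) - ln (1-x)"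
proof -
  let ?f = "\<lambda>t::real. ln (1+t) - ln (1-t) - 2*t - 2/3*t^3"
  have "?f 0 \<le> ?f x"
  proof (rule DERIV_nonneg_imp_nondecreasing[OF assms(1)])
    fix t :: real assume t: "0 \<le> t" "t \<le> x"
    have "DERIV ?f t :> (1/(1+t) - (-1)/(1-t) - 2 - 2*t^2)"
      using t assms by (auto intro!: derivative_eq_intros simp: power2_eq_square)
    moreover have "1/(1+t) - (-1)/(1-t) - 2 - 2*t^2 \<ge> 0"
    proof -
      have tt: "t*t < 1" using t assms mult_strict_mono[of t 1 t 1] by simp
      have "1/(1+t) - (-1)/(1-t) - 2 - 2*t^2 = 2*t^4/(1-t^2)"
        using t assms tt by (simp add: field_simps power2_eq_square) (simp add: algebra_simps power4_eq_xxxx)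
      also have "\<dots> \<ge> 0" using t assms tt by (intro divide_nonneg_pos) (auto simp: power2_eq_square)
      finally show ?thesis .
    qed
    ultimately show "\<exists>y. DERIV ?f t :> y \<and> y \<ge> 0" by blast
  qed
  thus ?thesis by simp
qed

lemma h_upper_aux:
  fixes t :: real assumes "0 \<le> t" "t*t < 1"
  shows "2 + (6 * t\<^sup>2 * (3 - 3 * t\<^sup>2) + 12 * (t ^ 3 * t)) / ((3 - 3 * t\<^sup>2) * (3 - 3 * t\<^sup>2)) - (1 / (1 + t) + 1 / (1 - t)) = 4 * t ^ 4 / (3 * (1 - t\<^sup>2)\<^sup>2)"
proof -
  have a: "3 - 3 * t\<^sup>2 \<noteq> 0" "1 + t \<noteq> 0" "1 - t \<noteq> 0" "1 - t\<^sup>2 \<noteq> 0" using assms by (auto simp: power2_eq_square)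
  show ?thesis using a by (simp add: divide_simps) algebra
qed

lemma h_upper:
  fixes x :: real assumes "0 \<le> x" "x < 1"
  shows "ln (1+x) - ln (1-x) \<le> 2*x + 2/3*x^3/(1-x^2)"
proof -
  let ?f = "\<lambda>t::real. 2*t + 2/3*t^3/(1-t^2) - (ln (1+t) - ln (1-t))"
  have "?f 0 \<le> ?f x"
  proof (rule DERIV_nonneg_imp_nondecreasing[OF assms(1)])
    fix t :: real assume t: "0 \<le> t" "t \<le> x"
    have tt: "t*t < 1" using t assms mult_strict_mono[of t 1 t 1] by simp
    have q: "1 - t^2 > 0" using tt by (simp add: power2_eq_square)
    have q2: "1 - t^2 \<noteq> 0" "3 - 3 * t^2 \<noteq> 0" "1 + t \<noteq> 0" "1 - t \<noteq> 0" using q t assms by auto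
    have "DERIV ?f t :> 4*t^4/(3*(1-t^2)^2)"
      using t assms tt q
      by (auto intro!: derivative_eq_intros simp: h_upper_aux)
    moreover have "4*t^4/(3*(1-t^2)^2) \<ge> 0" by simp
    ultimately show "\<exists>y. DERIV ?f t :> y \<and> y \<ge> 0" by blast
  qed
  thus ?thesis by simp
qed

definition Gs :: "nat \<Rightarrow> real" where
  "Gs k = ln (fact k) - (real k + 1/2) * ln (real k) + real k"

lemma ln_fact_Gs: "ln (fact k) = Gs k + (real k + 1/2) * ln (real k) - real k"
  by (simp add: Gs_def)

lemma Gs_step:
  assumes "k \<ge> 1"
  shows "Gs k - Gs (Suc k) = (real k + 1/2) * (ln (real k + 1) - ln (real k)) - 1"
proof -
  have "ln (fact (Suc k) :: real) = ln (real k + 1) + ln (fact k)"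
    by (simp add: ln_mult add.commute)
  thus ?thesis unfolding Gs_def by (simp add: algebra_simps)
qed

lemma ln_ratio:
  assumes "k \<ge> 1"
  defines "x \<equiv> 1 / (2 * real k + 1)"
  shows "ln (1+x) - ln (1-x) = ln (real k + 1) - ln (real k)" "0 \<le> x" "x < 1"
proof -
  have k: "real k \<ge> 1" using assms by simp
  have e1: "1 + x = (2 * real k + 2) / (2 * real k + 1)" unfolding x_def using k by (simp add: field_simps)
  have e2: "1 - x = (2 * real k) / (2 * real k + 1)" unfolding x_def using k by (simp add: field_simps)
  have "ln (1+x) - ln (1-x) = ln (2 * real k + 2) - ln (2 * real k)"
    unfolding e1 e2 using k by (simp add: ln_div)
  also have "\<dots> = ln (2 * (real k + 1)) - ln (2 * real k)" by (simp add: algebra_simps)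
  also have "\<dots> = ln (real k + 1) - ln (real k)"
  proof -
    have "ln (2 * (real k + 1)) = ln 2 + ln (real k + 1)" by (rule ln_mult_pos) (use k in auto)
    moreover have "ln (2 * real k) = ln 2 + ln (real k)" by (rule ln_mult_pos) (use k in auto)
    ultimately show ?thesis by linarith
  qed
  finally show "ln (1+x) - ln (1-x) = ln (real k + 1) - ln (real k)" .
  show "0 \<le> x" unfolding x_def by simp
  show "x < 1" unfolding x_def using k by simp
qed

lemma Gs_dec:
  assumes "k \<ge> 1"
  shows "Gs (Suc k) \<le> Gs k"
proof -
  define x where "x = 1 / (2 * real k + 1)"
  note r = ln_ratio[OF assms, folded x_def]
  have k: "real k \<ge> 1" using assms by simp
  have "2*x + 2/3*x^3 \<le> ln (real k + 1) - ln (real k)" using h_lower[OF r(2,3)] r(1) by simp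
  hence "(real k + 1/2) * (2*x + 2/3*x^3) \<le> (real k + 1/2) * (ln (real k + 1) - ln (real k))"
    by (intro mult_left_mono) auto
  moreover have "(real k + 1/2) * (2*x) = 1" unfolding x_def using k by (simp add: field_simps)
  moreover have "(real k + 1/2) * (2/3*x^3) \<ge> 0" using r(2) k by simp
  moreover have "(real k + 1/2) * (2*x + 2/3*x^3) = (real k + 1/2) * (2*x) + (real k + 1/2) * (2/3*x^3)"
    by (simp only: distrib_left)
  ultimately have "(real k + 1/2) * (ln (real k + 1) - ln (real k)) \<ge> 1" by linarith
  thus ?thesis using Gs_step[OF assms] by simp
qed

lemma Gs_inc:
  assumes "k \<ge> 1"
  shows "Gs k - 1/(12 * real k) \<le> Gs (Suc k) - 1/(12 * real (Suc k))"
proof -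
  define x where "x = 1 / (2 * real k + 1)"
  note r = ln_ratio[OF assms, folded x_def]
  have k: "real k \<ge> 1" using assms by simp
  have "ln (real k + 1) - ln (real k) \<le> 2*x + 2/3*x^3/(1-x^2)" using h_upper[OF r(2,3)] r(1) by simp
  hence "(real k + 1/2) * (ln (real k + 1) - ln (real k)) \<le> (real k + 1/2) * (2*x + 2/3*x^3/(1-x^2))"
    by (intro mult_left_mono) auto
  moreover have "(real k + 1/2) * (2*x + 2/3*x^3/(1-x^2)) = 1 + 1/(12 * real k) - 1/(12 * (real k + 1))"
  proof -
    have d: "2 * real k + 1 \<noteq> 0" "real k \<noteq> 0" "real k + 1 \<noteq> 0" using k by auto
    have x2: "1 - x^2 = 4 * real k * (real k + 1) / (2 * real k + 1)^2"
      unfolding x_def using d by (simp add: divide_simps) algebra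
    have "(real k + 1/2) * (2*x + 2/3*x^3/(1-x^2)) = (real k + 1/2) * (2*x) + (real k + 1/2) * (2/3*x^3/(1-x^2))"
      by (simp only: distrib_left)
    also have "(real k + 1/2) * (2*x) = 1" unfolding x_def using d by (simp add: divide_simps)
    also have "(real k + 1/2) * (2/3*x^3/(1-x^2)) = 1/(12 * real k) - 1/(12 * (real k + 1))"
      unfolding x2 unfolding x_def using d by (simp add: divide_simps) algebra
    finally show ?thesis by simp
  qed
  moreover have "1/(12 * real (Suc k)) = 1/(12 * (real k + 1))" by simp
  ultimately show ?thesis using Gs_step[OF assms] by linarith
qed

lemma Gs_mono:
  assumes "1 \<le> i" "i \<le> j"
  shows "Gs j \<le> Gs i" "Gs i \<le> Gs j + 1/(12 * real i)"
proof -
  have "Gs j \<le> Gs i \<and> Gs i - 1/(12 * real i) \<le> Gs j - 1/(12 * real j)"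
    using assms(2)
  proof (induction j rule: dec_induct)
    case base thus ?case by simp
  next
    case (step n)
    have n1: "n \<ge> 1" using step.hyps assms(1) by simp
    show ?case using step.IH Gs_dec[OF n1] Gs_inc[OF n1] by linarith
  qed
  moreover have "1/(12 * real j) \<ge> 0" by simp
  ultimately show "Gs j \<le> Gs i" "Gs i \<le> Gs j + 1/(12 * real i)" by linarith+
qed

lemma l4: "ln (4::real) = 2 * ln 2"
proof -
  have a: "ln ((2::real)*2) = ln 2 + ln 2" by (rule ln_mult_pos) auto
  have b: "(2::real)*2 = 4" by simp
  show ?thesis using a b by (metis mult_2)
qed
lemma l8: "ln (8::real) = 3 * ln 2" using ln_realpow[of "2::real" 3] by simp
lemma l6: "ln (6::real) = ln 2 + ln 3" using ln_mult_pos[of "2::real" 3] by simp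
lemma l24: "ln (24::real) = ln 3 + ln 8" using ln_mult_pos[of "3::real" 8] by simp

lemma ln2_lower: "ln (2::real) \<ge> 56/81"
proof -
  have "2*(1/3) + 2/3*(1/3)^3 \<le> ln (1 + 1/3) - ln (1 - (1/3::real))" by (rule h_lower) auto
  moreover have "ln (1 + 1/3) - ln (1 - (1/3::real)) = ln 2"
    by (simp add: ln_div l4)
  moreover have "2*(1/3) + 2/3*(1/3)^3 = (56/81::real)" by (simp add: power3_eq_cube)
  ultimately show ?thesis by linarith
qed

lemma ln3_upper: "ln (3::real) - ln 2 \<le> 73/180"
proof -
  have "ln (1 + 1/5) - ln (1 - (1/5::real)) \<le> 2*(1/5) + 2/3*(1/5)^3/(1-(1/5)^2)" by (rule h_upper) auto
  moreover have "ln (1 + 1/5) - ln (1 - (1/5::real)) = ln (3/2)"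
    by (simp add: ln_div l6 l4)
  moreover have "ln (3/2::real) = ln 3 - ln 2" by (simp add: ln_div)
  moreover have "2*(1/5) + 2/3*(1/5)^3/(1-(1/5)^2) = (73/180::real)"
    by (simp add: power2_eq_square power3_eq_cube)
  ultimately show ?thesis by linarith
qed

lemma Gs4: "Gs 4 \<le> 3/2 * ln 2 - 1/12"
proof -
  have f: "(fact 4 :: real) = 3 * 2^3" by (simp add: fact_numeral)
  have "ln (fact 4 :: real) = ln 3 + 3 * ln 2" unfolding f using l24 l8 by simp
  moreover have "ln (real 4) = 2 * ln 2" using l4 by simp
  ultimately have "Gs 4 = ln 3 + 3 * ln 2 - (9/2) * (2 * ln 2) + 4" unfolding Gs_def by simp
  thus ?thesis using ln2_lower ln3_upper by linarith
qed

lemma analytic: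
  fixes m n w :: nat
  assumes n0: "n > 0" and w0: "w > 0" and wm: "2 * w \<le> m"
  shows "sqrt (pi * real w * real n) * 2 powr (- (real n / 2) * (3 + log 2 (real w)))
         \<le> real ((m choose w)^n) / real ((m*n) choose (n*w))"
proof -
  define b where "b = m - w"
  have b1: "b \<ge> 1" "w \<le> b" using wm w0 unfolding b_def by auto
  have mwb: "m = w + b" using wm unfolding b_def by auto
  have m1: "m \<ge> 1" using mwb b1 by simp
  define Wr where "Wr = real w"
  define Br where "Br = real b"
  define Nr where "Nr = real n"
  have Wr1: "Wr \<ge> 1" using w0 by (simp add: Wr_def)
  have Br1: "Br \<ge> 1" using b1 by (simp add: Br_def)
  have Nr1: "Nr \<ge> 1" using n0 by (simp add: Nr_def)
  have rm: "real m = Wr + Br" using mwb by (simp add: Wr_def Br_def)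
  define Lm where "Lm = ln (real m)"
  define Lw where "Lw = ln Wr"
  define Lb where "Lb = ln Br"
  define Ln where "Ln = ln Nr"
  define L2 where "L2 = ln (2::real)"
  define Lp where "Lp = ln pi"
  have mn_sub: "m * n - n * w = n * b" unfolding b_def by (simp add: diff_mult_distrib2 mult.commute)
  have lfm: "ln (fact m) = Gs m + (Wr+Br+1/2)*Lm - (Wr+Br)"
    using ln_fact_Gs[of m] rm by (simp add: Lm_def)
  have lfw: "ln (fact w) = Gs w + (Wr+1/2)*Lw - Wr"
    using ln_fact_Gs[of w] by (simp add: Lw_def Wr_def)
  have lfb: "ln (fact b) = Gs b + (Br+1/2)*Lb - Br"
    using ln_fact_Gs[of b] by (simp add: Lb_def Br_def)
  have lnmn: "ln (real (m*n)) = Lm + Ln"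
    using m1 n0 by (simp add: Lm_def Ln_def Nr_def ln_mult_pos)
  have lnnw: "ln (real (n*w)) = Ln + Lw"
    using w0 n0 by (simp add: Lw_def Ln_def Nr_def Wr_def ln_mult_pos)
  have lnnb: "ln (real (n*b)) = Ln + Lb"
    using b1 n0 by (simp add: Lb_def Ln_def Nr_def Br_def ln_mult_pos)
  have lfM: "ln (fact (m*n)) = Gs (m*n) + ((Wr+Br)*Nr + 1/2)*(Lm+Ln) - (Wr+Br)*Nr"
    using ln_fact_Gs[of "m*n"] rm lnmn by (simp add: Nr_def)
  have lfnw: "ln (fact (n*w)) = Gs (n*w) + (Nr*Wr + 1/2)*(Ln+Lw) - Nr*Wr"
    using ln_fact_Gs[of "n*w"] lnnw by (simp add: Nr_def Wr_def)
  have lfnb: "ln (fact (n*b)) = Gs (n*b) + (Nr*Br + 1/2)*(Ln+Lb) - Nr*Br"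
    using ln_fact_Gs[of "n*b"] lnnb by (simp add: Nr_def Br_def)
  define c1 where "c1 = real (m choose w)"
  define c2 where "c2 = real ((m*n) choose (n*w))"
  have c1e: "c1 = fact m / (fact w * fact b)" unfolding c1_def b_def
    by (rule binomial_fact) (use wm in simp)
  have c2e: "c2 = fact (m*n) / (fact (n*w) * fact (n*b))" unfolding c2_def mn_sub[symmetric]
    by (rule binomial_fact) (use wm in \<open>simp add: mult.commute\<close>)
  have lc1: "ln c1 = ln (fact m) - ln (fact w) - ln (fact b)"
    unfolding c1e by (simp add: ln_div ln_mult)
  have lc2: "ln c2 = ln (fact (m*n)) - ln (fact (n*w)) - ln (fact (n*b))"
    unfolding c2e by (simp add: ln_div ln_mult)
  have c1p: "c1 > 0" unfolding c1e by simp
  have c2p: "c2 > 0" unfolding c2e by simp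
  define R where "R = real ((m choose w)^n) / real ((m*n) choose (n*w))"
  have Re: "R = c1^n / c2" unfolding R_def c1_def c2_def by simp
  have Rp: "R > 0" unfolding Re using c1p c2p by simp
  have LR: "ln R = Nr * ln c1 - ln c2" unfolding Re using c1p c2p
    by (simp add: ln_div ln_realpow Nr_def)
  define T where "T = sqrt (pi * real w * real n) * 2 powr (- (real n / 2) * (3 + log 2 (real w)))"
  have Tp: "T > 0" unfolding T_def using w0 n0 by simp
  have L2p: "L2 > 0" unfolding L2_def by simp
  have LT: "ln T = (Lp + Lw + Ln)/2 - (Nr/2)*(3*L2 + Lw)"
  proof -
    have "ln T = ln (sqrt (pi * real w * real n)) + ln (2 powr (- (real n / 2) * (3 + log 2 (real w))))"
      unfolding T_def using w0 n0 by (simp add: ln_mult_pos)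
    also have "ln (sqrt (pi * real w * real n)) = (Lp + Lw + Ln)/2"
      using w0 n0 by (simp add: ln_sqrt ln_mult_pos Lp_def Lw_def Ln_def Wr_def Nr_def)
    also have "ln (2 powr (- (real n / 2) * (3 + log 2 (real w)))) = - (Nr/2) * (3 + Lw / L2) * L2"
      by (simp add: log_def Nr_def Lw_def L2_def Wr_def)
    also have "- (Nr/2) * (3 + Lw / L2) * L2 = - (Nr/2)*(3*L2 + Lw)"
      using L2p by (simp add: field_simps)
    finally show ?thesis by simp
  qed
  define g where "g = Gs (m*n)"
  define iw where "iw = 1/(12*Wr)"
  define ib where "ib = 1/(12*Br)"
  have mmn: "m \<le> m*n" using n0 by simp
  have wbm: "w \<le> m" "b \<le> m" using mwb by auto
  have mle: "m \<le> m*n" "w \<le> m*n" "b \<le> m*n" "n*w \<le> m*n" "n*b \<le> m*n"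
    using mmn wbm le_trans[OF wbm(1) mmn] le_trans[OF wbm(2) mmn]
      mult_le_mono2[OF wbm(1), of n] mult_le_mono2[OF wbm(2), of n] by (auto simp: mult.commute)
  have h1: "g \<le> Gs m" unfolding g_def by (rule Gs_mono(1)) (use m1 mle in auto)
  have h2: "Gs w \<le> g + iw" unfolding g_def iw_def Wr_def
    by (rule Gs_mono(2)) (use w0 mle in auto)
  have h3: "Gs b \<le> g + ib" unfolding g_def ib_def Br_def
    by (rule Gs_mono(2)) (use b1 mle in auto)
  have h4: "g \<le> Gs (n*w)" unfolding g_def by (rule Gs_mono(1)) (use w0 n0 mle in auto)
  have h5: "g \<le> Gs (n*b)" unfolding g_def by (rule Gs_mono(1)) (use b1 n0 mle in auto)
  have iw12: "iw \<le> 1/12" unfolding iw_def using Wr1 by (simp add: field_simps)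
  have ib12: "ib \<le> 1/12" unfolding ib_def using Br1 by (simp add: field_simps)
  have ibW: "ib \<le> Wr/(2*(Wr+Br))"
  proof -
    have a: "Wr \<le> Wr*Br" using Wr1 Br1 by (simp add: mult_le_cancel_left1)
    have b: "Br \<le> Wr*Br" using Wr1 Br1 by (simp add: mult_le_cancel_right1)
    have "2*(Wr+Br) \<le> 12*(Wr*Br)" using a b Wr1 by (smt (verit))
    thus ?thesis unfolding ib_def using Wr1 Br1 by (simp add: field_simps)
  qed
  have lnlow: "Lm - Lb \<ge> Wr/(Wr+Br)"
  proof -
    have "ln (Br/(Wr+Br)) \<le> Br/(Wr+Br) - 1" by (rule ln_le_minus_one) (use Wr1 Br1 in simp)
    moreover have "ln (Br/(Wr+Br)) = Lb - Lm" unfolding Lb_def Lm_def rm using Wr1 Br1 by (simp add: ln_div)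
    moreover have "Br/(Wr+Br) - 1 = - (Wr/(Wr+Br))" using Wr1 Br1 by (simp add: field_simps)
    ultimately show ?thesis by linarith
  qed
  define X where "X = -g + (Lm - Lb)/2 + 3/2*L2 - iw - ib"
  define Y where "Y = 3/2*L2 - Lp/2 - iw - ib"
  have L2b: "L2 \<ge> 56/81" unfolding L2_def by (rule ln2_lower)
  have Lpb: "Lp \<le> 2 * L2"
  proof -
    have "ln pi \<le> ln (4::real)" using pi_less_4 pi_gt_zero by simp
    thus ?thesis using l4 by (simp add: Lp_def L2_def)
  qed
  have Y0: "Y \<ge> 0" unfolding Y_def using Lpb iw12 ib12 L2b by linarith
  have X0: "(Nr - 1) * X \<ge> 0"
  proof (cases "n = 1")
    case True thus ?thesis by (simp add: Nr_def)
  next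
    case False
    hence n2: "n \<ge> 2" using n0 by simp
    have "4 \<le> m * n" using mult_le_mono[OF _ n2, of 2 m] wm w0 by simp
    hence "g \<le> Gs 4" unfolding g_def by (intro Gs_mono(1)) auto
    have e: "(Wr/(Wr+Br))/2 = Wr/(2*(Wr+Br))" by (simp add: divide_divide_eq_left mult.commute)
    have ibq: "ib \<le> (Wr/(Wr+Br))/2" by (subst e) (rule ibW)
    have gen: "X \<ge> 0" if "q \<le> Lm - Lb" "ib \<le> q/2" for q
      unfolding X_def using that \<open>g \<le> Gs 4\<close> Gs4 iw12 L2_def by argo
    have "X \<ge> 0" by (rule gen[OF lnlow ibq])
    thus ?thesis using Nr1 by simp
  qed
  have n1: "Nr * (Gs m - g) \<ge> 0" "Nr * (g + iw - Gs w) \<ge> 0" "Nr * (g + ib - Gs b) \<ge> 0"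
    using Nr1 h1 h2 h3 by auto
  have ident: "ln R - ln T = Nr * (Gs m - g) + Nr * (g + iw - Gs w) + Nr * (g + ib - Gs b)
      + (Gs (n*w) - g) + (Gs (n*b) - g) + (Nr - 1) * X + Y"
    unfolding LR LT lc1 lc2 lfm lfw lfb lfM lfnw lfnb X_def Y_def g_def
    by (simp add: field_simps)
  have "ln T \<le> ln R" using ident n1 X0 Y0 h4 h5 by linarith
  hence "T \<le> R" using Tp Rp by simp
  thus ?thesis unfolding T_def R_def .
qed


theorem corollary2:
  fixes m n w d :: nat
  assumes "m > 0" "n > 0" "w > 0" "d > 0" "2 * w \<le> m"
  shows "real (A m n w d) \<ge>
    sqrt (pi * real w * real n) * 2 powr (- (real n / 2) * (3 + log 2 (real w))) * real (B (m * n) (n * w) d)"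
proof -
  have wm: "w \<le> m" using assms by simp
  have c: "B (m*n) (n*w) d * (m choose w)^n \<le> A m n w d * ((m*n) choose (n*w))"
    by (rule comb_main[OF wm])
  hence cr: "real (B (m*n) (n*w) d) * real ((m choose w)^n) \<le> real (A m n w d) * real ((m*n) choose (n*w))"
    by (metis of_nat_le_iff of_nat_mult)
  have "n * w \<le> m * n" using wm by (simp add: mult.commute)
  hence pos: "real ((m*n) choose (n*w)) > 0" by simp
  define T where "T = sqrt (pi * real w * real n) * 2 powr (- (real n / 2) * (3 + log 2 (real w)))"
  have TR: "T \<le> real ((m choose w)^n) / real ((m*n) choose (n*w))"
    unfolding T_def using analytic[of n w m] assms by simp
  have "T * real (B (m * n) (n * w) d) \<le> real ((m choose w)^n) / real ((m*n) choose (n*w)) * real (B (m * n) (n * w) d)"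
    using TR by (intro mult_right_mono) auto
  also have "\<dots> = real (B (m*n) (n*w) d) * real ((m choose w)^n) / real ((m*n) choose (n*w))"
    by simp
  also have "\<dots> \<le> real (A m n w d)" using cr pos by (simp add: divide_le_eq)
  finally show ?thesis unfolding T_def .
qed

end
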